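(* Let $n\ge1$ and let $P=\{(i,j)\colon 1\le i\le j\le n\}$ be the shifted staircase. Fix $0\le k\le n-1$ and let $B=\{(i,j)\in P\colon j-i=k\}$. Then $\sum_{p\in B}\mathbb{1}_p\equiv (n-k)/2$.
   Context: $P$ is ordered by $(i,j)\le(i',j')$ iff $i\le i'$ and $j\le j'$. $\mathcal{J}(P)$ is the set of order ideals of $P$. For $x\in P$, $I\in\mathcal{J}(P)$: $\mathbb{1}_x(I)=1$ if $x\in I$, else $0$; $T_x^+(I)=1$ if $x$ is a minimal element of $P\setminus I$, else $0$; $T_x^-(I)=1$ if $x$ is a maximal element of $I$, else $0$; $T_x=T_x^+-T_x^-$. For $f,g\colon\mathcal{J}(P)\to\mathbb{R}$, $f\equiv g$ means $f-g=\sum_{x\in P}c_xT_x$ for some real constants $c_x$; a real number denotes the corresponding constant function. *)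

theory Defs
  imports Main "HOL.Real"
begin

definition pleq :: "nat \<times> nat \<Rightarrow> nat \<times> nat \<Rightarrow> bool" where
  "pleq x y \<longleftrightarrow> fst x \<le> fst y \<and> snd x \<le> snd y"

definition staircase :: "nat \<Rightarrow> (nat \<times> nat) set" where
  "staircase n = {(i, j). 1 \<le> i \<and> i \<le> j \<and> j \<le> n}"

definition order_ideals :: "(nat \<times> nat) set \<Rightarrow> (nat \<times> nat) set set" where
  "order_ideals Q = {I. I \<subseteq> Q \<and> (\<forall>x\<in>I. \<forall>y\<in>Q. pleq y x \<longrightarrow> y \<in> I)}"

definition indic :: "nat \<times> nat \<Rightarrow> (nat \<times> nat) set \<Rightarrow> real" where
  "indic x I = (if x \<in> I then 1 else 0)"

definition Tplus :: "(nat \<times> nat) set \<Rightarrow> nat \<times> nat \<Rightarrow> (nat \<times> nat) set \<Rightarrow> real" where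
  "Tplus Q x I = (if x \<in> Q - I \<and> (\<forall>y\<in>Q - I. pleq y x \<longrightarrow> y = x) then 1 else 0)"

definition Tminus :: "(nat \<times> nat) set \<Rightarrow> nat \<times> nat \<Rightarrow> (nat \<times> nat) set \<Rightarrow> real" where
  "Tminus Q x I = (if x \<in> I \<and> (\<forall>y\<in>I. pleq x y \<longrightarrow> y = x) then 1 else 0)"

definition toggle :: "(nat \<times> nat) set \<Rightarrow> nat \<times> nat \<Rightarrow> (nat \<times> nat) set \<Rightarrow> real" where
  "toggle Q x I = Tplus Q x I - Tminus Q x I"

definition toggle_equiv :: "(nat \<times> nat) set \<Rightarrow> ((nat \<times> nat) set \<Rightarrow> real) \<Rightarrow> ((nat \<times> nat) set \<Rightarrow> real) \<Rightarrow> bool" where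
  "toggle_equiv Q f g \<longleftrightarrow>
     (\<exists>c :: nat \<times> nat \<Rightarrow> real. \<forall>I\<in>order_ideals Q. f I - g I = (\<Sum>x\<in>Q. c x * toggle Q x I))"

end

theory Submission imports Defs begin

lemma downclosed_eq:
  fixes A :: "nat set"
  assumes "A \<subseteq> {1..L}" and "\<forall>i\<in>A. \<forall>i'. 1 \<le> i' \<longrightarrow> i' \<le> i \<longrightarrow> i' \<in> A"
  shows "A = {1..card A}"
proof (cases "A = {}")
  case True then show ?thesis by simp
next
  case False
  have fin: "finite A" using assms(1) finite_subset by blast
  define M where "M = Max A"
  have MA: "M \<in> A" using fin False M_def by simp
  have "A = {1..M}"
  proof
    show "A \<subseteq> {1..M}" using assms(1) fin M_def by auto
    show "{1..M} \<subseteq> A" using assms(2) MA by auto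
  qed
  then show ?thesis by simp
qed

definition Nd :: "nat \<Rightarrow> (nat \<times> nat) set \<Rightarrow> nat \<Rightarrow> nat" where
  "Nd n I e = card {i\<in>{1..n-e}. (i,i+e)\<in>I}"

lemma mem_stair: "(a,b) \<in> staircase n \<longleftrightarrow> 1 \<le> a \<and> a \<le> b \<and> b \<le> n"
  by (simp add: staircase_def)


definition cc :: "nat \<Rightarrow> nat \<Rightarrow> nat \<times> nat \<Rightarrow> real" where
  "cc n k x = - (\<Sum>m\<in>{k..<n}. (if snd x - fst x \<le> m then (if snd x - fst x = 0 then 1/2 else 1) else 0))"

lemma cc_diag: "cc n k (i, i+e) = - (\<Sum>m\<in>{k..<n}. if e \<le> m then (if e = 0 then 1/2 else 1) else 0)"
  unfolding cc_def by simp

lemma sum_B: "(\<Sum>x\<in>{(i,j)\<in>staircase n. j - i = e}. f x) = (\<Sum>i\<in>{1..n-e}. f (i,i+e))"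
proof -
  have "{(i,j)\<in>staircase n. j - i = e} = (\<lambda>i. (i,i+e)) ` {1..n-e}"
  proof
    show "{(i,j)\<in>staircase n. j - i = e} \<subseteq> (\<lambda>i. (i,i+e)) ` {1..n-e}"
    proof
      fix x assume "x \<in> {(i,j)\<in>staircase n. j - i = e}"
      then obtain i j where x: "x = (i,j)" "1 \<le> i" "i \<le> j" "j \<le> n" "j - i = e"
        by (auto simp: staircase_def)
      then have "x = (i, i+e)" "i \<in> {1..n-e}" by auto
      then show "x \<in> (\<lambda>i. (i,i+e)) ` {1..n-e}" by blast
    qed
    show "(\<lambda>i. (i,i+e)) ` {1..n-e} \<subseteq> {(i,j)\<in>staircase n. j - i = e}"
      by (auto simp: staircase_def)
  qed
  moreover have "inj_on (\<lambda>i. (i,i+e)) {1..n-e}" by (auto simp: inj_on_def)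
  ultimately show ?thesis by (simp add: sum.reindex)
qed

lemma finite_stair: "finite (staircase n)"
proof -
  have "staircase n \<subseteq> {1..n} \<times> {1..n}" by (auto simp: staircase_def)
  moreover have "finite ({1..n} \<times> {1..n})" by simp
  ultimately show ?thesis by (rule finite_subset)
qed

lemma sum_Q:
  assumes "1 \<le> n"
  shows "(\<Sum>x\<in>staircase n. f x) = (\<Sum>e<n. \<Sum>x\<in>{(i,j)\<in>staircase n. j - i = e}. f x)"
proof -
  have "(\<Sum>e<n. \<Sum>x\<in>{x. x \<in> staircase n \<and> snd x - fst x = e}. f x) = (\<Sum>x\<in>staircase n. f x)"
    by (rule sum.group[OF finite_stair]) (auto simp: staircase_def)
  moreover have "\<And>e. {x. x \<in> staircase n \<and> snd x - fst x = e} = {(i,j)\<in>staircase n. j - i = e}" by auto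
  ultimately show ?thesis by simp
qed

context
  fixes n :: nat and I :: "(nat \<times> nat) set"
  assumes I: "I \<in> order_ideals (staircase n)"
begin

lemma I_sub: "x \<in> I \<Longrightarrow> x \<in> staircase n"
  using I by (auto simp: order_ideals_def)

lemma I_down: "(a,b) \<in> I \<Longrightarrow> 1 \<le> a' \<Longrightarrow> a' \<le> b' \<Longrightarrow> a' \<le> a \<Longrightarrow> b' \<le> b \<Longrightarrow> (a',b') \<in> I"
proof -
  assume h: "(a,b) \<in> I" "1 \<le> a'" "a' \<le> b'" "a' \<le> a" "b' \<le> b"
  have "b \<le> n" using I_sub[OF h(1)] by (simp add: mem_stair)
  then have "(a',b') \<in> staircase n" using h by (simp add: mem_stair)
  then show ?thesis using I h unfolding order_ideals_def pleq_def by force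
qed

lemma N_set: "{i\<in>{1..n-e}. (i,i+e)\<in>I} = {1..Nd n I e}"
  unfolding Nd_def
proof (rule downclosed_eq[where L="n-e"])
  show "\<forall>i\<in>{i \<in> {1..n - e}. (i, i + e) \<in> I}. \<forall>i'. 1 \<le> i' \<longrightarrow> i' \<le> i \<longrightarrow> i' \<in> {i \<in> {1..n - e}. (i, i + e) \<in> I}"
  proof (intro ballI allI impI)
    fix i i' assume h: "i \<in> {i \<in> {1..n - e}. (i, i + e) \<in> I}" "1 \<le> i'" "i' \<le> i"
    then have "(i', i' + e) \<in> I" using I_down[of i "i+e" i' "i'+e"] by simp
    then show "i' \<in> {i \<in> {1..n - e}. (i, i + e) \<in> I}" using h by auto
  qed
qed auto

lemma N_le: "Nd n I e \<le> n - e"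
proof -
  have "card {i\<in>{1..n-e}. (i,i+e)\<in>I} \<le> card {1..n-e}" by (rule card_mono) auto
  then show ?thesis by (simp add: Nd_def)
qed

lemma memN: "1 \<le> i \<Longrightarrow> i + e \<le> n \<Longrightarrow> ((i,i+e) \<in> I \<longleftrightarrow> i \<le> Nd n I e)"
proof -
  assume "1 \<le> i" "i + e \<le> n"
  then have "(i,i+e) \<in> I \<longleftrightarrow> i \<in> {i\<in>{1..n-e}. (i,i+e)\<in>I}" by auto
  also have "\<dots> \<longleftrightarrow> i \<le> Nd n I e" using \<open>1 \<le> i\<close> by (simp only: N_set) auto
  finally show ?thesis .
qed

lemma N_mono: "Nd n I (Suc e) \<le> Nd n I e"
proof (cases "Nd n I (Suc e) = 0")
  case False
  define a where "a = Nd n I (Suc e)"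
  have a1: "1 \<le> a" using False a_def by simp
  have an: "a + Suc e \<le> n" using N_le[of "Suc e"] a_def a1 by simp
  have "(a, a + Suc e) \<in> I" using memN[OF a1 an] a_def by simp
  then have "(a, a + e) \<in> I" using a1 I_down[of a "a + Suc e" a "a + e"] by simp
  then show ?thesis using memN[OF a1] an a_def by simp
qed simp

lemma N_step: "Nd n I e \<le> Nd n I (Suc e) + 1"
proof (cases "Nd n I e \<le> 1")
  case False
  define a where "a = Nd n I e"
  have a1: "2 \<le> a" using False a_def by simp
  have an: "a + e \<le> n" using N_le[of e] a_def a1 by simp
  have "(a, a + e) \<in> I" using memN[of a e] a1 an a_def by simp
  then have "(a - 1, a + e) \<in> I" using a1 I_down[of a "a + e" "a - 1" "a + e"] by simp
  moreover have "(a - 1) + Suc e = a + e" using a1 by simp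
  ultimately have "(a - 1, (a - 1) + Suc e) \<in> I" by (simp only:)
  then have "a - 1 \<le> Nd n I (Suc e)" using memN[of "a-1" "Suc e"] a1 an by simp
  then show ?thesis using a_def by simp
qed simp

lemma Tplus_char:
  assumes x: "(i,j) \<in> staircase n"
  shows "Tplus (staircase n) (i,j) I = (if (i,j) \<notin> I \<and> (2 \<le> i \<longrightarrow> (i-1,j) \<in> I) \<and> (i < j \<longrightarrow> (i,j-1) \<in> I) then 1 else 0)"
proof -
  have "(\<forall>y\<in>staircase n - I. pleq y (i,j) \<longrightarrow> y = (i,j)) \<longleftrightarrow> ((2 \<le> i \<longrightarrow> (i-1,j) \<in> I) \<and> (i < j \<longrightarrow> (i,j-1) \<in> I))"
  proof
    assume h: "\<forall>y\<in>staircase n - I. pleq y (i,j) \<longrightarrow> y = (i,j)"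
    show "(2 \<le> i \<longrightarrow> (i-1,j) \<in> I) \<and> (i < j \<longrightarrow> (i,j-1) \<in> I)"
    proof (intro conjI impI)
      assume "2 \<le> i"
      then have "(i-1,j) \<in> staircase n" "pleq (i-1,j) (i,j)" "(i-1,j) \<noteq> (i,j)"
        using x by (auto simp: mem_stair pleq_def)
      then show "(i-1,j) \<in> I" using h by blast
    next
      assume "i < j"
      then have "(i,j-1) \<in> staircase n" "pleq (i,j-1) (i,j)" "(i,j-1) \<noteq> (i,j)"
        using x by (auto simp: mem_stair pleq_def)
      then show "(i,j-1) \<in> I" using h by blast
    qed
  next
    assume h: "(2 \<le> i \<longrightarrow> (i-1,j) \<in> I) \<and> (i < j \<longrightarrow> (i,j-1) \<in> I)"
    show "\<forall>y\<in>staircase n - I. pleq y (i,j) \<longrightarrow> y = (i,j)"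
    proof (intro ballI impI)
      fix y assume y: "y \<in> staircase n - I" "pleq y (i,j)"
      obtain a b where ab: "y = (a,b)" by fastforce
      have a: "1 \<le> a" "a \<le> b" "a \<le> i" "b \<le> j" using y ab by (auto simp: mem_stair pleq_def)
      show "y = (i,j)"
      proof (rule ccontr)
        assume ne: "y \<noteq> (i,j)"
        show False
        proof (cases "a < i")
          case True
          then have "(i-1,j) \<in> I" using h a by simp
          then have "(a,b) \<in> I" using I_down[of "i-1" j a b] a True by simp
          then show False using y ab by simp
        next
          case False
          then have "a = i" "b < j" using a ne ab by auto
          then have "(i,j-1) \<in> I" using h a by simp
          then have "(a,b) \<in> I" using I_down[of i "j-1" a b] a \<open>a = i\<close> \<open>b < j\<close> by simp
          then show False using y ab by simp
        qed
      qed
    qed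
  qed
  then show ?thesis using x unfolding Tplus_def by auto
qed

lemma Tminus_char:
  assumes x: "(i,j) \<in> staircase n"
  shows "Tminus (staircase n) (i,j) I = (if (i,j) \<in> I \<and> (i < j \<longrightarrow> (i+1,j) \<notin> I) \<and> (j < n \<longrightarrow> (i,j+1) \<notin> I) then 1 else 0)"
proof -
  have "(i,j) \<in> I \<Longrightarrow> (\<forall>y\<in>I. pleq (i,j) y \<longrightarrow> y = (i,j)) \<longleftrightarrow> ((i < j \<longrightarrow> (i+1,j) \<notin> I) \<and> (j < n \<longrightarrow> (i,j+1) \<notin> I))"
  proof
    assume h: "\<forall>y\<in>I. pleq (i,j) y \<longrightarrow> y = (i,j)"
    show "(i < j \<longrightarrow> (i+1,j) \<notin> I) \<and> (j < n \<longrightarrow> (i,j+1) \<notin> I)"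
    proof (intro conjI impI)
      show "(i+1,j) \<notin> I" using h by (auto simp: pleq_def)
      show "(i,j+1) \<notin> I" using h by (auto simp: pleq_def)
    qed
  next
    assume h: "(i < j \<longrightarrow> (i+1,j) \<notin> I) \<and> (j < n \<longrightarrow> (i,j+1) \<notin> I)"
    show "\<forall>y\<in>I. pleq (i,j) y \<longrightarrow> y = (i,j)"
    proof (intro ballI impI)
      fix y assume y: "y \<in> I" "pleq (i,j) y"
      obtain a b where ab: "y = (a,b)" by fastforce
      have a: "1 \<le> a" "a \<le> b" "i \<le> a" "j \<le> b" "b \<le> n" using y ab I_sub by (auto simp: mem_stair pleq_def)
      have ij: "1 \<le> i" "i \<le> j" using x by (auto simp: mem_stair)
      show "y = (i,j)"
      proof (rule ccontr)
        assume ne: "y \<noteq> (i,j)"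
        show False
        proof (cases "j < b")
          case True
          then have "(i,j+1) \<in> I" using I_down[of a b i "j+1"] a ij y ab by simp
          then show False using h a True by simp
        next
          case False
          then have "b = j" "i < a" using a ne ab by auto
          then have "(i+1,j) \<in> I" using I_down[of a b "i+1" j] a ij y ab by simp
          then show False using h a \<open>b = j\<close> \<open>i < a\<close> by simp
        qed
      qed
    qed
  qed
  then show ?thesis unfolding Tminus_def by auto
qed

abbreviation "N \<equiv> Nd n I"

lemma N_facts:
  "N (Suc e) \<le> N e" "N e \<le> N (Suc e) + 1" "0 < e \<Longrightarrow> N e \<le> N (e - 1)"
  "0 < e \<Longrightarrow> N (e - 1) \<le> N e + 1" "N e \<le> n - e"
proof -
  show "N (Suc e) \<le> N e" "N e \<le> N (Suc e) + 1" "N e \<le> n - e" using N_mono N_step N_le by auto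
  assume "0 < e"
  then have "Suc (e - 1) = e" by simp
  then show "N e \<le> N (e - 1)" "N (e - 1) \<le> N e + 1" using N_mono[of "e-1"] N_step[of "e-1"] by simp_all
qed

lemma Tplus_diag:
  assumes "1 \<le> i" "i + e \<le> n"
  shows "Tplus (staircase n) (i,i+e) I = (if i = N e + 1 \<and> N (Suc e) = N e \<and> (0 < e \<longrightarrow> N (e-1) = N e + 1) then 1 else 0)"
proof -
  have mem: "(i,i+e) \<in> staircase n" using assms by (simp add: mem_stair)
  have c1: "(i,i+e) \<in> I \<longleftrightarrow> i \<le> N e" using memN assms by simp
  have c2: "2 \<le> i \<Longrightarrow> ((i-1,i+e) \<in> I \<longleftrightarrow> i - 1 \<le> N (Suc e))" using memN[of "i-1" "Suc e"] assms by simp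
  have c3: "0 < e \<Longrightarrow> ((i,i+e-1) \<in> I \<longleftrightarrow> i \<le> N (e-1))" using memN[of i "e-1"] assms by simp
  have f: "N (Suc e) \<le> N e" "N e \<le> N (Suc e) + 1" "N e \<le> n - e" "N (Suc e) \<le> n - Suc e"
    using N_facts by auto
  have eqv: "((i,i+e) \<notin> I \<and> (2 \<le> i \<longrightarrow> (i-1,i+e) \<in> I) \<and> (i < i+e \<longrightarrow> (i,i+e-1) \<in> I)) \<longleftrightarrow>
     (i = N e + 1 \<and> N (Suc e) = N e \<and> (0 < e \<longrightarrow> N (e-1) = N e + 1))"
  proof (cases "e = 0")
    case True
    then show ?thesis by (cases "2 \<le> i") (use c1 c2 f assms in auto)
  next
    case False
    have g: "N e \<le> N (e - 1)" "N (e - 1) \<le> N e + 1" using N_facts False by auto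
    show ?thesis by (cases "2 \<le> i") (use c1 c2 c3 f g False assms in auto)
  qed
  show ?thesis unfolding Tplus_char[OF mem] using eqv by simp
qed

lemma Tminus_diag:
  assumes "1 \<le> i" "i + e \<le> n"
  shows "Tminus (staircase n) (i,i+e) I = (if i = N e \<and> N (Suc e) + 1 = N e \<and> (0 < e \<longrightarrow> N (e-1) = N e) then 1 else 0)"
proof -
  have mem: "(i,i+e) \<in> staircase n" using assms by (simp add: mem_stair)
  have c1: "(i,i+e) \<in> I \<longleftrightarrow> i \<le> N e" using memN assms by simp
  have c2: "0 < e \<Longrightarrow> ((i+1,i+e) \<in> I \<longleftrightarrow> i + 1 \<le> N (e - 1))" using memN[of "i+1" "e-1"] assms by simp
  have c3: "i + e < n \<Longrightarrow> ((i,i+e+1) \<in> I \<longleftrightarrow> i \<le> N (Suc e))" using memN[of i "Suc e"] assms by simp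
  have f: "N (Suc e) \<le> N e" "N e \<le> N (Suc e) + 1" "N e \<le> n - e" "N (Suc e) \<le> n - Suc e"
    using N_facts by auto
  have eqv: "((i,i+e) \<in> I \<and> (i < i+e \<longrightarrow> (i+1,i+e) \<notin> I) \<and> (i+e < n \<longrightarrow> (i,i+e+1) \<notin> I)) \<longleftrightarrow>
     (i = N e \<and> N (Suc e) + 1 = N e \<and> (0 < e \<longrightarrow> N (e-1) = N e))"
  proof (cases "e = 0")
    case True
    then show ?thesis by (cases "i + e < n") (use c1 c3 f assms in auto)
  next
    case False
    have g: "N e \<le> N (e - 1)" "N (e - 1) \<le> N e + 1" using N_facts False by auto
    show ?thesis by (cases "i + e < n") (use c1 c2 c3 f g False assms in auto)
  qed
  show ?thesis unfolding Tminus_char[OF mem] using eqv by simp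
qed

lemma Dplus:
  "(\<Sum>i\<in>{1..n-e}. Tplus (staircase n) (i,i+e) I) =
   (if N (Suc e) = N e \<and> (0 < e \<longrightarrow> N (e-1) = N e + 1) \<and> N e + 1 \<le> n - e then 1 else 0)"
proof -
  let ?P = "N (Suc e) = N e \<and> (0 < e \<longrightarrow> N (e-1) = N e + 1)"
  have "(\<Sum>i\<in>{1..n-e}. Tplus (staircase n) (i,i+e) I) =
        (\<Sum>i\<in>{1..n-e}. if i = N e + 1 then (if ?P then 1 else 0) else 0)"
  proof (rule sum.cong[OF refl])
    fix i assume "i \<in> {1..n-e}"
    then have h: "1 \<le> i" "i + e \<le> n" by auto
    show "Tplus (staircase n) (i,i+e) I = (if i = N e + 1 then (if ?P then 1 else 0) else 0)"
      using Tplus_diag[OF h] by simp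
  qed
  also have "\<dots> = (if ?P \<and> N e + 1 \<le> n - e then 1 else 0)"
    by (cases "e = 0") (simp_all add: sum.delta)
  finally show ?thesis by (cases "e = 0") simp_all
qed

lemma Dminus:
  "(\<Sum>i\<in>{1..n-e}. Tminus (staircase n) (i,i+e) I) =
   (if N (Suc e) + 1 = N e \<and> (0 < e \<longrightarrow> N (e-1) = N e) then 1 else 0)"
proof -
  let ?P = "N (Suc e) + 1 = N e \<and> (0 < e \<longrightarrow> N (e-1) = N e)"
  have "(\<Sum>i\<in>{1..n-e}. Tminus (staircase n) (i,i+e) I) =
        (\<Sum>i\<in>{1..n-e}. if i = N e then (if ?P then 1 else 0) else 0)"
  proof (rule sum.cong[OF refl])
    fix i assume "i \<in> {1..n-e}"
    then have h: "1 \<le> i" "i + e \<le> n" by auto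
    show "Tminus (staircase n) (i,i+e) I = (if i = N e  then (if ?P then 1 else 0) else 0)"
      using Tminus_diag[OF h] by simp
  qed
  also have "\<dots> = (if ?P \<and> N e \<in> {1..n-e} then 1 else 0)"
    by (cases "e = 0") (simp_all add: sum.delta)
  also have "\<dots> = (if ?P then 1 else 0)" using N_facts(5)[of e] by auto
  finally show ?thesis by (cases "e = 0") simp_all
qed

definition "Dd e = (\<Sum>i\<in>{1..n-e}. toggle (staircase n) (i,i+e) I)"

lemma D_eq: "Dd e = (if N (Suc e) = N e \<and> (0 < e \<longrightarrow> N (e-1) = N e + 1) \<and> N e + 1 \<le> n - e then 1 else 0)
   - (if N (Suc e) + 1 = N e \<and> (0 < e \<longrightarrow> N (e-1) = N e) then 1 else 0)"
  unfolding Dd_def toggle_def sum_subtractf Dplus Dminus ..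

lemma D0: "1 \<le> n \<Longrightarrow> Dd 0 = 1 - 2 * (real (N 0) - real (N 1))"
  using N_facts[of 0] N_facts(5)[of 1] unfolding D_eq by auto

lemma Dpos: "0 < e \<Longrightarrow> e < n \<Longrightarrow> Dd e = (real (N (e-1)) - real (N e)) - (real (N e) - real (N (Suc e)))"
proof -
  assume e: "0 < e" "e < n"
  have f: "N (Suc e) \<le> N e" "N e \<le> N (Suc e) + 1" "N e \<le> n - e" "N (Suc e) \<le> n - Suc e"
     "N e \<le> N (e - 1)" "N (e - 1) \<le> N e + 1" "N (e - 1) \<le> n - (e - 1)"
    using N_facts N_facts(5)[of "e-1"] e by auto
  show ?thesis unfolding D_eq using f e by auto
qed

lemma G_eq: "m < n \<Longrightarrow> (\<Sum>e<Suc m. (if e = 0 then 1/2 else 1) * Dd e) = 1/2 - (real (N m) - real (N (Suc m)))"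
proof (induction m)
  case 0
  then show ?case using D0 by simp
next
  case (Suc m)
  then have "(\<Sum>e<Suc (Suc m). (if e = 0 then 1/2 else 1) * Dd e) = 1/2 - (real (N m) - real (N (Suc m))) + Dd (Suc m)"
    by simp
  also have "Dd (Suc m) = (real (N m) - real (N (Suc m))) - (real (N (Suc m)) - real (N (Suc (Suc m))))"
    using Dpos[of "Suc m"] Suc.prems by simp
  finally show ?case by simp
qed

lemma W_sum: "m < n \<Longrightarrow> (\<Sum>e<n. (if e \<le> m then (if e = 0 then 1/2 else 1) else 0) * Dd e) = 1/2 - (real (N m) - real (N (Suc m)))"
proof -
  assume m: "m < n"
  have "(\<Sum>e<n. (if e \<le> m then (if e = 0 then 1/2 else 1) else 0) * Dd e) = (\<Sum>e<Suc m. (if e = 0 then 1/2 else 1) * Dd e)"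
    by (rule sum.mono_neutral_cong_right) (use m in auto)
  then show ?thesis using G_eq[OF m] by simp
qed

lemma tele: "k < n \<Longrightarrow> (\<Sum>m\<in>{k..<n}. 1/2 - (real (N m) - real (N (Suc m)))) = (real n - real k)/2 - real (N k)"
proof -
  assume k: "k < n"
  have "(\<Sum>m\<in>{k..<n}. 1/2 - (real (N m) - real (N (Suc m)))) = (\<Sum>m\<in>{k..<n}. (1/2::real) + (real (N (Suc m)) - real (N m)))"
    by (rule sum.cong) auto
  also have "\<dots> = (\<Sum>m\<in>{k..<n}. (1/2::real)) + (\<Sum>m\<in>{k..<n}. real (N (Suc m)) - real (N m))"
    by (rule sum.distrib)
  also have "(\<Sum>m\<in>{k..<n}. real (N (Suc m)) - real (N m)) = real (N n) - real (N k)"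
    using sum_Suc_diff'[of k n "\<lambda>m. real (N m)"] k by simp
  also have "N n = 0" using N_le[of n] by simp
  finally show ?thesis using k by (simp add: of_nat_diff field_simps)
qed

lemma main_I:
  assumes n: "1 \<le> n" and k: "k < n"
  shows "(\<Sum>p\<in>{(i, j) \<in> staircase n. j - i = k}. indic p I) - (real n - real k) / 2 =
    (\<Sum>x\<in>staircase n. cc n k x * toggle (staircase n) x I)"
proof -
  have "(\<Sum>p\<in>{(i, j) \<in> staircase n. j - i = k}. indic p I) = (\<Sum>i\<in>{1..n-k}. indic (i,i+k) I)"
    by (rule sum_B)
  also have "\<dots> = (\<Sum>i\<in>{1..n-k}. if i \<in> {1..N k} then 1 else 0)"
  proof (rule sum.cong[OF refl])
    fix i assume "i \<in> {1..n-k}"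
    then have h: "1 \<le> i" "i + k \<le> n" by auto
    show "indic (i,i+k) I = (if i \<in> {1..N k} then 1 else 0)"
      using memN[OF h] h unfolding indic_def by simp
  qed
  also have "\<dots> = (\<Sum>i\<in>{1..n-k} \<inter> {1..N k}. 1)"
    by (rule sum.inter_restrict[symmetric]) simp
  also have "{1..n-k} \<inter> {1..N k} = {1..N k}" using N_le[of k] by auto
  finally have L: "(\<Sum>p\<in>{(i, j) \<in> staircase n. j - i = k}. indic p I) = real (N k)" by simp
  have "(\<Sum>x\<in>staircase n. cc n k x * toggle (staircase n) x I) =
      (\<Sum>e<n. \<Sum>i\<in>{1..n-e}. cc n k (i,i+e) * toggle (staircase n) (i,i+e) I)"
    by (simp add: sum_Q[OF n] sum_B)
  also have "\<dots> = (\<Sum>e<n. (- (\<Sum>m\<in>{k..<n}. (if e \<le> m then (if e = 0 then 1/2 else 1) else 0))) * Dd e)"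
    by (simp only: cc_diag Dd_def sum_distrib_left)
  also have "\<dots> = - (\<Sum>e<n. \<Sum>m\<in>{k..<n}. (if e \<le> m then (if e = 0 then 1/2 else 1) else 0) * Dd e)"
    by (simp add: sum_distrib_right sum_negf)
  also have "\<dots> = - (\<Sum>m\<in>{k..<n}. \<Sum>e<n. (if e \<le> m then (if e = 0 then 1/2 else 1) else 0) * Dd e)"
    by (subst sum.swap) simp
  also have "\<dots> = - (\<Sum>m\<in>{k..<n}. 1/2 - (real (N m) - real (N (Suc m))))"
    by (simp add: W_sum)
  also have "\<dots> = real (N k) - (real n - real k) / 2"
    using tele[OF k] by simp
  finally show ?thesis using L by simp
qed

end

theorem theorem3p17:
  fixes n k :: nat
  assumes "n \<ge> 1" and "k \<le> n - 1"
  shows "toggle_equiv (staircase n)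
           (\<lambda>I. \<Sum>p\<in>{(i, j) \<in> staircase n. j - i = k}. indic p I)
           (\<lambda>I. (real n - real k) / 2)"
  unfolding toggle_equiv_def
proof (intro exI ballI)
  fix I assume "I \<in> order_ideals (staircase n)"
  moreover have "k < n" using assms by simp
  ultimately show "(\<Sum>p\<in>{(i, j) \<in> staircase n. j - i = k}. indic p I) - (real n - real k) / 2 =
    (\<Sum>x\<in>staircase n. cc n k x * toggle (staircase n) x I)"
    using main_I assms(1) by blast
qed

end
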